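(* If a Moksha-Patam board has no chute-barrier (i.e. there is no cell $c$ such that $c,c+1,\dots,c+5$ are all entrances of chutes), then the board is ultimately winnable: starting from cell $1$, the chain reaches cell $100$ with probability $1$.
   Context: A Moksha-Patam board consists of the cells $1,\dots,100$ together with a finite set of components; a component is an ordered pair $(a,b)$ of distinct cells, $a$ being its entrance and $b$ its exit; it is a ladder if $a<b$ and a chute if $a>b$. Conventions: distinct components have distinct entrances; no cell is both an entrance and an exit; cells $1$ and $100$ are neither entrances nor exits (components may share exits). The associated Markov chain has state space $\{1,\dots,100\}$ and transition probabilities defined as follows: $p_{100,100}=1$; for $i<100$ and each die value $d\in\{1,\dots,6\}$ (each with probability $1/6$), if $i+d>100$ the chain stays at $i$; otherwise, with $j=i+d$, the chain moves to $b$ if $j$ is the entrance of a component $(j,b)$ and to $j$ otherwise. The game starts at state $1$. The board is ultimately winnable if the chain started at $1$ reaches $100$ with probability $1$. A chute-barrier is a collection of six or more chutes whose entrances are consecutive cells. *)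

theory Defs
  imports Complex_Main
begin

type_synonym board = "(nat \<times> nat) set"

text \<open>A component is a pair (entrance, exit).\<close>

definition valid_board :: "board \<Rightarrow> bool" where
  "valid_board C \<longleftrightarrow> finite C
     \<and> (\<forall>(a,b)\<in>C. a \<in> {1..100} \<and> b \<in> {1..100} \<and> a \<noteq> b)
     \<and> (\<forall>a b b'. (a,b) \<in> C \<and> (a,b') \<in> C \<longrightarrow> b = b')
     \<and> (\<forall>(a,b)\<in>C. \<forall>(a',b')\<in>C. a \<noteq> b')
     \<and> (\<forall>(a,b)\<in>C. a \<noteq> 1 \<and> a \<noteq> 100 \<and> b \<noteq> 1 \<and> b \<noteq> 100)"

definition is_entrance :: "board \<Rightarrow> nat \<Rightarrow> bool" where
  "is_entrance C j \<longleftrightarrow> (\<exists>b. (j,b) \<in> C)"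

definition chute_entrance :: "board \<Rightarrow> nat \<Rightarrow> bool" where
  "chute_entrance C a \<longleftrightarrow> (\<exists>b. (a,b) \<in> C \<and> b < a)"

definition has_chute_barrier :: "board \<Rightarrow> bool" where
  "has_chute_barrier C \<longleftrightarrow> (\<exists>c. \<forall>k<6. chute_entrance C (c + k))"

definition move :: "board \<Rightarrow> nat \<Rightarrow> nat \<Rightarrow> nat" where
  "move C i d = (if i + d > 100 then i
                 else if is_entrance C (i + d) then (THE b. (i + d, b) \<in> C)
                 else i + d)"

definition trans_prob :: "board \<Rightarrow> nat \<Rightarrow> nat \<Rightarrow> real" where
  "trans_prob C i j =
     (if i = 100 then (if j = 100 then 1 else 0)
      else real (card {d \<in> {1..6::nat}. move C i d = j}) / 6)"

fun hit_within :: "board \<Rightarrow> nat \<Rightarrow> nat \<Rightarrow> real" where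
  "hit_within C 0 i = (if i = 100 then 1 else 0)"
| "hit_within C (Suc n) i =
     (if i = 100 then 1 else (\<Sum>j\<in>{1..100}. trans_prob C i j * hit_within C n j))"

text \<open>Ultimately winnable: from cell 1, 100 is reached with probability 1
  (the hitting probability is the limit of the within-n-steps probabilities).\<close>
definition ultimately_winnable :: "board \<Rightarrow> bool" where
  "ultimately_winnable C \<longleftrightarrow> (\<lambda>n. hit_within C n 1) \<longlonglongrightarrow> 1"

end

theory Submission
  imports Defs
begin

lemma move_range:
  assumes "valid_board C" "i \<in> {1..100}" "d \<in> {1..6}"
  shows "move C i d \<in> {1..100}"
proof -
  have U: "\<And>a b b'. (a,b) \<in> C \<Longrightarrow> (a,b') \<in> C \<Longrightarrow> b = b'"
   and R: "\<And>a b. (a,b) \<in> C \<Longrightarrow> b \<in> {1..100}"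
    using assms(1) unfolding valid_board_def by blast+
  show ?thesis
  proof (cases "i + d > 100")
    case True then show ?thesis using assms by (simp add: move_def)
  next
    case False
    show ?thesis
    proof (cases "is_entrance C (i+d)")
      case True
      then obtain b where b: "(i+d,b) \<in> C" unfolding is_entrance_def by blast
      have "(THE b. (i + d, b) \<in> C) = b" using b U by blast
      then show ?thesis using False True R[OF b] by (simp add: move_def)
    next
      case F2: False
      then show ?thesis using False assms by (simp add: move_def)
    qed
  qed
qed

lemma progress:
  assumes "valid_board C" "\<not> has_chute_barrier C" "i \<in> {1..99}"
  shows "\<exists>d\<in>{1..6}. move C i d > i"
proof -
  have U: "\<And>a b b'. (a,b) \<in> C \<Longrightarrow> (a,b') \<in> C \<Longrightarrow> b = b'"
   and N: "\<And>a b. (a,b) \<in> C \<Longrightarrow> a \<noteq> b \<and> a \<noteq> 100"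
    using assms(1) unfolding valid_board_def by blast+
  show ?thesis
  proof (cases "i \<ge> 94")
    case True
    define d where "d = 100 - i"
    have "\<not> is_entrance C 100" using N unfolding is_entrance_def by blast
    then have "move C i d = 100" using True assms(3) by (simp add: move_def d_def)
    moreover have "d \<in> {1..6}" using True assms(3) unfolding d_def by auto
    ultimately show ?thesis using assms(3) by (intro bexI[of _ d]) auto
  next
    case False
    from assms(2) obtain k where k: "k < 6" "\<not> chute_entrance C (i + 1 + k)"
      unfolding has_chute_barrier_def by blast
    define d where "d = k + 1"
    have d: "d \<in> {1..6}" "i + d \<le> 100" using k False by (auto simp: d_def)
    have "move C i d > i"
    proof (cases "is_entrance C (i+d)")
      case True
      then obtain b where b: "(i+d,b) \<in> C" unfolding is_entrance_def by blast
      have "(THE b. (i + d, b) \<in> C) = b" using b U by blast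
      moreover have "\<not> b < i + d"
      proof
        assume "b < i + d"
        moreover have "i + d = i + 1 + k" by (simp add: d_def)
        ultimately have "chute_entrance C (i + 1 + k)" using b unfolding chute_entrance_def by auto
        then show False using k(2) by blast
      qed
      moreover have "b \<noteq> i + d" using N b by blast
      ultimately show ?thesis using True d by (simp add: move_def)
    next
      case F2: False
      then show ?thesis using d by (simp add: move_def)
    qed
    then show ?thesis using d by blast
  qed
qed

lemma hit_step:
  assumes "valid_board C" "i \<in> {1..99}"
  shows "hit_within C (Suc n) i = (\<Sum>d\<in>{1..6}. hit_within C n (move C i d)) / 6"
proof -
  let ?h = "hit_within C n"
  let ?m = "move C i"
  have img: "?m ` {1..6} \<subseteq> {1..100}" using move_range[OF assms(1)] assms(2) by auto
  have tp: "\<And>j. j \<in> {1..100} \<Longrightarrow> trans_prob C i j * ?h j = (\<Sum>d\<in>{d\<in>{1..6}. ?m d = j}. ?h (?m d)) / 6"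
  proof -
    fix j
    have "(\<Sum>d\<in>{d\<in>{1..6}. ?m d = j}. ?h (?m d)) = (\<Sum>d\<in>{d\<in>{1..6::nat}. ?m d = j}. ?h j)"
      by (rule sum.cong) auto
    also have "\<dots> = real (card {d\<in>{1..6::nat}. ?m d = j}) * ?h j" by simp
    finally show "trans_prob C i j * ?h j = (\<Sum>d\<in>{d\<in>{1..6}. ?m d = j}. ?h (?m d)) / 6"
      using assms(2) by (simp add: trans_prob_def)
  qed
  have "hit_within C (Suc n) i = (\<Sum>j\<in>{1..100}. trans_prob C i j * ?h j)"
    using assms(2) by (simp only: hit_within.simps(2) if_False) (rule if_not_P, auto)
  also have "\<dots> = (\<Sum>j\<in>{1..100}. (\<Sum>d\<in>{d\<in>{1..6}. ?m d = j}. ?h (?m d)) / 6)"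
    by (rule sum.cong[OF refl tp])
  also have "\<dots> = (\<Sum>j\<in>{1..100}. (\<Sum>d\<in>{d\<in>{1..6}. ?m d = j}. ?h (?m d))) / 6"
    by (simp only: sum_divide_distrib)
  also have "(\<Sum>j\<in>{1..100}. (\<Sum>d\<in>{d\<in>{1..6}. ?m d = j}. ?h (?m d))) = (\<Sum>d\<in>{1..6}. ?h (?m d))"
    by (rule sum.group) (use img in auto)
  finally show ?thesis .
qed

lemma hit_bounds:
  assumes "valid_board C"
  shows "i \<in> {1..100} \<Longrightarrow> 0 \<le> hit_within C n i \<and> hit_within C n i \<le> 1"
proof (induction n arbitrary: i)
  case 0 then show ?case by simp
next
  case (Suc n)
  show ?case
  proof (cases "i = 100")
    case True then show ?thesis by simp
  next
    case False
    then have i: "i \<in> {1..99}" using Suc.prems by auto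
    have b: "\<And>d. d \<in> {1..6} \<Longrightarrow> 0 \<le> hit_within C n (move C i d) \<and> hit_within C n (move C i d) \<le> 1"
      using Suc.IH move_range[OF assms] Suc.prems by blast
    have "0 \<le> (\<Sum>d\<in>{1..6::nat}. hit_within C n (move C i d))"
      using b by (intro sum_nonneg) auto
    moreover have "(\<Sum>d\<in>{1..6::nat}. hit_within C n (move C i d)) \<le> (\<Sum>d\<in>{1..6::nat}. 1)"
      using b by (intro sum_mono) auto
    ultimately show ?thesis using hit_step[OF assms i, of n] by simp
  qed
qed

lemma hit_mono_Suc:
  assumes "valid_board C"
  shows "i \<in> {1..100} \<Longrightarrow> hit_within C n i \<le> hit_within C (Suc n) i"
proof (induction n arbitrary: i)
  case 0
  show ?case using hit_bounds[OF assms 0, of 1] by (cases "i = 100") auto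
next
  case (Suc n)
  show ?case
  proof (cases "i = 100")
    case True then show ?thesis by simp
  next
    case False
    then have i: "i \<in> {1..99}" using Suc.prems by auto
    have "(\<Sum>d\<in>{1..6::nat}. hit_within C n (move C i d)) \<le> (\<Sum>d\<in>{1..6::nat}. hit_within C (Suc n) (move C i d))"
      using Suc.IH move_range[OF assms] Suc.prems by (intro sum_mono) auto
    then show ?thesis using hit_step[OF assms i, of n] hit_step[OF assms i, of "Suc n"] by simp
  qed
qed

lemma hit_mono:
  assumes "valid_board C" "i \<in> {1..100}" "m \<le> n"
  shows "hit_within C m i \<le> hit_within C n i"
  using lift_Suc_mono_le[of "\<lambda>n. hit_within C n i", OF hit_mono_Suc[OF assms(1,2)] assms(3)] .

lemma aux: "(Y::real) \<le> X \<Longrightarrow> Y = 6 - S \<Longrightarrow> h = S/6 \<Longrightarrow> 1 - h \<le> X/6"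
  by linarith

lemma contract:
  assumes "valid_board C" "\<not> has_chute_barrier C"
    and M: "\<forall>j\<in>{1..100}. 1 - hit_within C n j \<le> M"
  shows "\<forall>i\<in>{1..100}. 100 - i \<le> r \<longrightarrow> 1 - hit_within C (n + r) i \<le> (1 - (1/6)^r) * M"
proof -
  have h100: "hit_within C n 100 = 1" by (cases n) auto
  show ?thesis
proof (induction r)
  case 0
  show ?case using h100 by auto
next
  case (Suc r)
  have M0: "0 \<le> M" using M h100 by force
  show ?case
  proof (intro ballI impI)
    fix i assume i: "i \<in> {1..100}" "100 - i \<le> Suc r"
    show "1 - hit_within C (n + Suc r) i \<le> (1 - (1/6) ^ Suc r) * M"
    proof (cases "i = 100")
      case True
      have "(1/6::real) ^ Suc r \<le> 1" by (rule power_le_one) auto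
      then have "0 \<le> (1 - (1/6::real) ^ Suc r)" by simp
      then show ?thesis using True M0 by simp
    next
      case False
      then have i9: "i \<in> {1..99}" using i by auto
      obtain d0 where d0: "d0 \<in> {1..6}" "move C i d0 > i" using progress[OF assms(1,2) i9] by blast
      let ?u = "\<lambda>d::nat. 1 - hit_within C (n + r) (move C i d)"
      have bnd: "\<And>d::nat. d \<in> {1..6} \<Longrightarrow> ?u d \<le> M"
      proof -
        fix d :: nat assume d: "d \<in> {1..6}"
        have "move C i d \<in> {1..100}" using move_range[OF assms(1) i(1) d] .
        then show "?u d \<le> M" using M hit_mono[OF assms(1), of "move C i d" n "n + r"] by force
      qed
      have b0: "?u d0 \<le> (1 - (1/6)^r) * M"
        using Suc.IH move_range[OF assms(1) i(1) d0(1)] d0(2) i(2) by auto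
      have "(\<Sum>d\<in>{1..6}. ?u d) = ?u d0 + (\<Sum>d\<in>{1..6} - {d0}. ?u d)"
        using d0(1) by (simp add: sum.remove)
      also have "(\<Sum>d\<in>{1..6} - {d0}. ?u d) \<le> (\<Sum>d\<in>{1..6::nat} - {d0}. M)"
        using bnd by (intro sum_mono) auto
      also have "\<dots> = 5 * M" using d0(1) by simp
      finally have "(\<Sum>d\<in>{1..6}. ?u d) \<le> (1 - (1/6)^r) * M + 5 * M" using b0 by linarith
      moreover have "(\<Sum>d\<in>{1..6::nat}. ?u d) = 6 - (\<Sum>d\<in>{1..6}. hit_within C (n + r) (move C i d))"
        by (simp add: sum_subtractf)
      moreover have hs: "hit_within C (n + Suc r) i = (\<Sum>d\<in>{1..6}. hit_within C (n + r) (move C i d)) / 6"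
        using hit_step[OF assms(1) i9, of "n + r"] by (simp only: add_Suc_right)
      ultimately have "1 - hit_within C (n + Suc r) i \<le> ((1 - (1/6)^r) * M + 5 * M) / 6"
        using aux by blast
      also have "\<dots> = (1 - (1/6) ^ Suc r) * M" by (simp add: field_simps)
      finally show ?thesis .
    qed
  qed
qed
qed

lemma geom:
  assumes "valid_board C" "\<not> has_chute_barrier C"
  shows "\<forall>j\<in>{1..100}. 1 - hit_within C (99 * k) j \<le> (1 - (1/6::real)^99) ^ k"
proof (induction k)
  case 0
  show ?case
  proof (intro ballI)
    fix j :: nat assume j: "j \<in> {1..100}"
    have "0 \<le> hit_within C 0 j" using hit_bounds[OF assms(1) j, of 0] by blast
    then show "1 - hit_within C (99 * 0) j \<le> (1 - (1/6::real)^99) ^ 0" by simp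
  qed
next
  case (Suc k)
  have H: "\<forall>i\<in>{1..100}. 100 - i \<le> 99 \<longrightarrow> 1 - hit_within C (99 * k + 99) i \<le> (1 - (1/6)^99) * (1 - (1/6::real)^99) ^ k"
    by (rule contract[OF assms Suc.IH])
  have eq: "99 * Suc k = 99 * k + 99" by simp
  show ?case
  proof (intro ballI)
    fix j :: nat assume j: "j \<in> {1..100}"
    have "100 - j \<le> 99" using j by auto
    then show "1 - hit_within C (99 * Suc k) j \<le> (1 - (1/6::real)^99) ^ Suc k"
      unfolding eq power_Suc using H j by blast
  qed
qed

theorem mainTheorem6:
  assumes "valid_board C"
    and "\<not> has_chute_barrier C"
  shows "ultimately_winnable C"
  unfolding ultimately_winnable_def
proof (rule LIMSEQ_I)
  fix r :: real assume r: "0 < r"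
  define c where "c = 1 - (1/6::real)^99"
  have p1: "(1/6::real)^99 \<le> 1" by (rule power_le_one) auto
  have p2: "0 < (1/6::real)^99" by (rule zero_less_power) auto
  have c: "0 \<le> c" "c < 1" unfolding c_def using p1 p2 by linarith+
  have "(\<lambda>k. c ^ k) \<longlonglongrightarrow> 0" using c by (intro LIMSEQ_power_zero) auto
  then obtain no where no: "\<forall>n\<ge>no. norm (c ^ n - 0) < r" using r LIMSEQ_D by blast
  have k: "norm (c ^ no - 0) < r" using no by blast
  have ck: "0 \<le> c ^ no" using c(1) by (rule zero_le_power)
  have k2: "c ^ no < r" using k ck by simp
  have one: "(1::nat) \<in> {1..100}" by simp
  show "\<exists>no. \<forall>n\<ge>no. norm (hit_within C n 1 - 1) < r"
  proof (intro exI allI impI)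
    fix n assume n: "99 * no \<le> n"
    have a: "1 - hit_within C (99*no) 1 \<le> c ^ no"
      using bspec[OF geom[OF assms, of no] one] unfolding c_def .
    have b: "hit_within C (99*no) 1 \<le> hit_within C n 1" by (rule hit_mono[OF assms(1) one n])
    have d: "hit_within C n 1 \<le> 1" using hit_bounds[OF assms(1) one, of n] by blast
    have "norm (hit_within C n 1 - 1) = 1 - hit_within C n 1" using d by simp
    then show "norm (hit_within C n 1 - 1) < r" using a b k2 by linarith
  qed
qed

end
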